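(* Let $\mathfrak a=((\lambda_j,\alpha_j))_{j\in\mathbb Z}$ be a sequence with $(\lambda_j)$ strictly increasing real, $\lambda_0\le0<\lambda_1$, each $\alpha_j$ a non-zero matrix in $M_r^+$, satisfying condition (A1), and let $\mu:=\mu^{\mathfrak a}$. Then the limit $$H_\mu(x)=\lim_{n\to\infty}\int_{(-\pi(n-\frac12),\,\pi(n+\frac12)]}e^{2i\lambda x}\,d(\mu-\mu_0)(\lambda)$$ exists in the topology of $L_2((-1,1),M_r)$, and $H_\mu(x)^*=H_\mu(-x)$ for a.e. $x\in(-1,1)$.
   Context: $M_r$ is the algebra of complex $r\times r$ matrices with operator norm, $I$ its identity, $M_r^+=\{A: A=A^*\ge0\}$. $\Delta_n:=(\pi n-\frac\pi2,\pi n+\frac\pi2]$. Condition (A1): $\sup_{n\in\mathbb Z}\sum_{\lambda_j\in\Delta_n}1<\infty$, $\sum_{n\in\mathbb Z}\sum_{\lambda_j\in\Delta_n}|\lambda_j-\pi n|^2<\infty$, $\sum_{n\in\mathbb Z}\|I-\sum_{\lambda_k\in\Delta_n}\alpha_k\|^2<\infty$. $\mu^{\mathfrak a}:=\sum_j\alpha_j\delta_{\lambda_j}$, $\mu_0:=\sum_{n\in\mathbb Z}I\delta_{\pi n}$, with $\delta_\lambda$ the Dirac measure at $\lambda$. *)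

theory Defs
  imports "HOL-Analysis.Analysis"
begin

definition opnorm :: "complex^'r^'r \<Rightarrow> real" where
  "opnorm A = onorm (\<lambda>v::complex^'r. A *v v)"

definition adj :: "complex^'r^'r \<Rightarrow> complex^'r^'r" where
  "adj A = (\<chi> i j. cnj (A $ j $ i))"

definition smat :: "complex \<Rightarrow> complex^'r^'r \<Rightarrow> complex^'r^'r" where
  "smat c A = (\<chi> i j. c * A $ i $ j)"

definition psd :: "complex^'r^'r \<Rightarrow> bool" where
  "psd A \<longleftrightarrow> adj A = A \<and>
     (\<forall>v::complex^'r. 0 \<le> Re (\<Sum>i\<in>UNIV. cnj (v $ i) * (A *v v) $ i))"

definition Delta :: "int \<Rightarrow> real set" where
  "Delta n = {pi * of_int n - pi/2 <.. pi * of_int n + pi/2}"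

definition idx_in :: "(int \<Rightarrow> real) \<Rightarrow> real set \<Rightarrow> int set" where
  "idx_in lam S = {j. lam j \<in> S}"

definition condA1 :: "(int \<Rightarrow> real) \<Rightarrow> (int \<Rightarrow> complex^'r^'r) \<Rightarrow> bool" where
  "condA1 lam alpha \<longleftrightarrow>
     (\<exists>B::nat. \<forall>n. finite (idx_in lam (Delta n)) \<and> card (idx_in lam (Delta n)) \<le> B) \<and>
     (\<lambda>n. \<Sum>j\<in>idx_in lam (Delta n). (lam j - pi * of_int n)^2) summable_on UNIV \<and>
     (\<lambda>n. (opnorm (mat 1 - (\<Sum>k\<in>idx_in lam (Delta n). alpha k)))^2) summable_on UNIV"

text \<open>Integral of e^{2i\<lambda>x} over (-\<pi>(n-1/2), \<pi>(n+1/2)] with respect to the discrete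
  matrix measure \<mu>^a - \<mu>_0, written out as the corresponding finite sums of point masses.\<close>
definition partialH :: "(int \<Rightarrow> real) \<Rightarrow> (int \<Rightarrow> complex^'r^'r) \<Rightarrow> nat \<Rightarrow> real \<Rightarrow> complex^'r^'r" where
  "partialH lam alpha n x =
     (let S = {- pi * (real n - 1/2) <.. pi * (real n + 1/2)} in
       (\<Sum>j\<in>idx_in lam S. smat (cis (2 * lam j * x)) (alpha j))
       - (\<Sum>k\<in>{k::int. pi * of_int k \<in> S}. smat (cis (2 * pi * of_int k * x)) (mat 1)))"

end

theory Submission
  imports Defs "HOL-Probability.Characteristic_Functions"
begin

lemma convergent_if_summable_diff:
  fixes f :: "nat \<Rightarrow> 'b::banach"
  assumes "summable (\<lambda>k. norm (f (Suc k) - f k))"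
  shows "convergent f"
proof -
  have "summable (\<lambda>k. f (Suc k) - f k)" by (rule summable_norm_cancel[OF assms])
  then have "(\<lambda>n. \<Sum>k<n. f (Suc k) - f k) \<longlonglongrightarrow> suminf (\<lambda>k. f (Suc k) - f k)"
    by (rule summable_LIMSEQ)
  moreover have "(\<lambda>n. \<Sum>k<n. f (Suc k) - f k) = (\<lambda>n. f n - f 0)"
    by (rule ext, rule sum_lessThan_telescope)
  ultimately have "(\<lambda>n. f n - f 0) \<longlonglongrightarrow> suminf (\<lambda>k. f (Suc k) - f k)" by simp
  then have "(\<lambda>n. (f n - f 0) + f 0) \<longlonglongrightarrow> suminf (\<lambda>k. f (Suc k) - f k) + f 0"
    by (rule tendsto_add[OF _ tendsto_const])
  then show ?thesis unfolding convergent_def by auto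
qed

lemma subseq_choose:
  fixes eps :: "nat \<Rightarrow> real"
  assumes "eps \<longlonglongrightarrow> 0"
  shows "\<exists>s. strict_mono s \<and> (\<forall>k. \<forall>n\<ge>s k. eps n \<le> (1/4)^k)"
proof -
  have "\<forall>k. \<exists>N. \<forall>n\<ge>N. eps n \<le> (1/4)^k"
  proof
    fix k :: nat
    have "(0::real) < (1/4)^k" by simp
    from LIMSEQ_D[OF assms this] obtain N where "\<forall>n\<ge>N. norm (eps n - 0) < (1/4)^k" by blast
    then have "\<forall>n\<ge>N. eps n \<le> (1/4)^k" by (auto simp: less_imp_le dest: abs_less_iff[THEN iffD1])
    then show "\<exists>N. \<forall>n\<ge>N. eps n \<le> (1/4)^k" by blast
  qed
  then obtain N where N: "\<And>k n. n \<ge> N k \<Longrightarrow> eps n \<le> (1/4)^k" by metis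
  define s where "s = rec_nat (N 0) (\<lambda>k r. max (Suc r) (N (Suc k)))"
  have s0: "s 0 = N 0" and sS: "\<And>k. s (Suc k) = max (Suc (s k)) (N (Suc k))" by (simp_all add: s_def)
  have "strict_mono s" by (rule strict_mono_Suc_iff[THEN iffD2]) (simp add: sS less_max_iff_disj)
  moreover have sN: "s k \<ge> N k" for k by (cases k) (simp_all add: s0 sS)
  moreover have "\<forall>k. \<forall>n\<ge>s k. eps n \<le> (1/4)^k"
  proof (intro allI impI)
    fix k n assume "s k \<le> n"
    then have "N k \<le> n" using sN[of k] by linarith
    then show "eps n \<le> (1/4)^k" by (rule N)
  qed
  ultimately show ?thesis by (intro exI[where x=s] conjI)
qed

lemma L2_limit:
  fixes P :: "nat \<Rightarrow> real \<Rightarrow> 'b::{banach, second_countable_topology}"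
    and eps :: "nat \<Rightarrow> real"
  assumes meas[measurable]: "\<And>n. P n \<in> borel_measurable lborel"
    and P0: "\<And>x. P 0 x = 0"
    and bnd: "\<And>n m. n \<le> m \<Longrightarrow>
       (\<integral>\<^sup>+ x \<in> {-1<..<1}. ennreal ((norm (P m x - P n x))^2) \<partial>lborel) \<le> ennreal (eps n)"
    and eps: "eps \<longlonglongrightarrow> 0"
  shows "\<exists>s. strict_mono s \<and>
     (\<lambda>x. lim (\<lambda>i. if Cauchy (\<lambda>i. P (s i) x) then P (s i) x else 0)) \<in> borel_measurable lborel \<and>
     (\<integral>\<^sup>+ x \<in> {-1<..<1}. ennreal ((norm (lim (\<lambda>i. if Cauchy (\<lambda>i. P (s i) x) then P (s i) x else 0)))^2) \<partial>lborel) < \<infinity> \<and>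
     (\<lambda>n. \<integral>\<^sup>+ x \<in> {-1<..<1}. ennreal ((norm (P n x - lim (\<lambda>i. if Cauchy (\<lambda>i. P (s i) x) then P (s i) x else 0)))^2) \<partial>lborel) \<longlonglongrightarrow> 0"
proof -
  define A :: "real set" where "A = {-1<..<1}"
  obtain s where sm: "strict_mono s" and seps: "\<And>k n. n \<ge> s k \<Longrightarrow> eps n \<le> (1/4)^k"
    using subseq_choose[OF eps] by blast
  define H where "H x = lim (\<lambda>i. if Cauchy (\<lambda>i. P (s i) x) then P (s i) x else 0)" for x
  have Hmeas[measurable]: "H \<in> borel_measurable lborel"
    unfolding H_def by measurable
  define d where "d k x = norm (P (s (Suc k)) x - P (s k) x)" for k x
  have dmeas[measurable]: "d k \<in> borel_measurable lborel" for k unfolding d_def by measurable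
  have mA: "emeasure lborel A = 2" unfolding A_def by simp
  have dint: "(\<integral>\<^sup>+ x. ennreal (d k x) * indicator A x \<partial>lborel) \<le> ennreal (2 * (1/2)^k)" for k
  proof -
    define c :: real where "c = (1/2)^k"
    have cpos: "c > 0" unfolding c_def by simp
    have sq: "(1/4::real)^k = c^2" unfolding c_def power2_eq_square power_mult_distrib[symmetric] by simp
    have i2: "(\<integral>\<^sup>+ x. ennreal ((d k x)^2) * indicator A x \<partial>lborel) \<le> ennreal (c^2)"
    proof -
      have "s k \<le> s (Suc k)" using sm by (simp add: strict_mono_less_eq)
      from bnd[OF this] have "(\<integral>\<^sup>+ x. ennreal ((d k x)^2) * indicator A x \<partial>lborel) \<le> ennreal (eps (s k))"
        by (simp add: d_def A_def)
      also have "\<dots> \<le> ennreal (c^2)" using seps[of k "s k"] sq by (intro ennreal_leI) simp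
      finally show ?thesis .
    qed
    have pw: "ennreal (d k x) * indicator A x \<le> ennreal (c/2) * indicator A x + ennreal (1/(2*c)) * (ennreal ((d k x)^2) * indicator A x)" for x
    proof (cases "x \<in> A")
      case True
      have "d k x \<le> c/2 + (1/(2*c)) * (d k x)^2"
      proof -
        have "0 \<le> (d k x - c)^2" by simp
        then have "2*c* d k x \<le> c^2 + (d k x)^2" by (simp add: power2_diff algebra_simps)
        then have "d k x \<le> (c^2 + (d k x)^2) / (2*c)" using cpos by (simp add: field_simps)
        also have "\<dots> = c/2 + (1/(2*c)) * (d k x)^2" using cpos by (simp add: field_simps power2_eq_square)
        finally show ?thesis .
      qed
      then show ?thesis using True cpos
        by (simp add: ennreal_plus[symmetric] ennreal_mult[symmetric] del: ennreal_plus)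
    qed simp
    have "(\<integral>\<^sup>+ x. ennreal (d k x) * indicator A x \<partial>lborel) \<le>
        (\<integral>\<^sup>+ x. ennreal (c/2) * indicator A x + ennreal (1/(2*c)) * (ennreal ((d k x)^2) * indicator A x) \<partial>lborel)"
      by (rule nn_integral_mono) (rule pw)
    also have "\<dots> = ennreal (c/2) * emeasure lborel A + ennreal (1/(2*c)) * (\<integral>\<^sup>+ x. ennreal ((d k x)^2) * indicator A x \<partial>lborel)"
      unfolding A_def by (subst nn_integral_add) (auto simp: nn_integral_cmult)
    also have "\<dots> \<le> ennreal (c/2) * 2 + ennreal (1/(2*c)) * ennreal (c^2)"
      using i2 mA by (intro add_mono mult_left_mono) auto
    also have "\<dots> = ennreal (c + c/2)"
    proof -
      have e1: "ennreal (c/2) * 2 = ennreal c" using ennreal_mult''[of 2 "c/2"] by simp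
      have "(1/(2*c)) * c^2 = c/2" using cpos by (simp add: power2_eq_square field_simps)
      then have e2: "ennreal (1/(2*c)) * ennreal (c^2) = ennreal (c/2)" using cpos
        by (metis ennreal_mult'' zero_le_power2)
      show ?thesis using cpos by (simp add: e1 e2 ennreal_plus[symmetric] del: ennreal_plus)
    qed
    also have "\<dots> \<le> ennreal (2 * c)" using cpos by (intro ennreal_leI) simp
    finally show ?thesis unfolding c_def .
  qed
  have sumint: "(\<integral>\<^sup>+ x. (\<Sum>k. ennreal (d k x) * indicator A x) \<partial>lborel) \<noteq> \<infinity>"
  proof -
    have "(\<integral>\<^sup>+ x. (\<Sum>k. ennreal (d k x) * indicator A x) \<partial>lborel) = (\<Sum>k. \<integral>\<^sup>+ x. ennreal (d k x) * indicator A x \<partial>lborel)"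
      unfolding A_def by (rule nn_integral_suminf) measurable
    also have "\<dots> \<le> (\<Sum>k. ennreal (2 * (1/2)^k))"
      by (intro suminf_le dint) auto
    also have "\<dots> = ennreal (\<Sum>k. 2 * (1/2)^k)"
      by (intro suminf_ennreal2) (auto intro: summable_mult summable_geometric)
    finally show ?thesis by (auto simp: top_unique)
  qed
  have AEconv: "AE x in lborel. x \<in> A \<longrightarrow> Cauchy (\<lambda>i. P (s i) x)"
  proof -
    have "AE x in lborel. (\<Sum>k. ennreal (d k x) * indicator A x) \<noteq> \<infinity>"
      by (rule nn_integral_PInf_AE[OF _ sumint]) (unfold A_def, measurable)
    then show ?thesis
    proof (rule AE_mp, intro AE_I2 impI)
      fix x assume fin: "(\<Sum>k. ennreal (d k x) * indicator A x) \<noteq> \<infinity>" and xA: "x \<in> A"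
      then have "(\<Sum>k. ennreal (d k x)) \<noteq> top" by simp
      then have "summable (\<lambda>k. d k x)" by (intro summable_suminf_not_top) (auto simp: d_def)
      then have "convergent (\<lambda>i. P (s i) x)" unfolding d_def by (rule convergent_if_summable_diff)
      then show "Cauchy (\<lambda>i. P (s i) x)" by (rule convergent_Cauchy)
    qed
  qed
  have Hlim: "AE x in lborel. x \<in> A \<longrightarrow> (\<lambda>i. P (s i) x) \<longlonglongrightarrow> H x"
    using AEconv
  proof (rule AE_mp, intro AE_I2 impI)
    fix x assume "x \<in> A \<longrightarrow> Cauchy (\<lambda>i. P (s i) x)" "x \<in> A"
    then have C: "Cauchy (\<lambda>i. P (s i) x)" by blast
    then have "H x = lim (\<lambda>i. P (s i) x)" by (simp add: H_def)
    then show "(\<lambda>i. P (s i) x) \<longlonglongrightarrow> H x" using C Cauchy_convergent convergent_LIMSEQ_iff by metis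
  qed
  have main: "(\<integral>\<^sup>+ x. ennreal ((norm (P n x - H x))^2) * indicator A x \<partial>lborel) \<le> ennreal (eps n)" for n
  proof -
    define g where "g k x = ennreal ((norm (P (s k) x - P n x))^2) * indicator A x" for k x
    have gm[measurable]: "g k \<in> borel_measurable lborel" for k unfolding g_def A_def by measurable
    have "AE x in lborel. liminf (\<lambda>k. g k x) = ennreal ((norm (P n x - H x))^2) * indicator A x"
      using Hlim
    proof (rule AE_mp, intro AE_I2 impI)
      fix x assume h: "x \<in> A \<longrightarrow> (\<lambda>i. P (s i) x) \<longlonglongrightarrow> H x"
      show "liminf (\<lambda>k. g k x) = ennreal ((norm (P n x - H x))^2) * indicator A x"
      proof (cases "x \<in> A")
        case True
        then have "(\<lambda>i. P (s i) x) \<longlonglongrightarrow> H x" using h by blast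
        then have "(\<lambda>k. ennreal ((norm (P (s k) x - P n x))^2)) \<longlonglongrightarrow> ennreal ((norm (H x - P n x))^2)"
          by (intro tendsto_ennrealI tendsto_intros)
        then have "(\<lambda>k. g k x) \<longlonglongrightarrow> ennreal ((norm (P n x - H x))^2) * indicator A x"
          using True by (simp add: g_def norm_minus_commute)
        then show ?thesis by (simp add: lim_imp_Liminf)
      next
        case False then show ?thesis by (simp add: g_def Liminf_const)
      qed
    qed
    then have "(\<integral>\<^sup>+ x. ennreal ((norm (P n x - H x))^2) * indicator A x \<partial>lborel) = (\<integral>\<^sup>+ x. liminf (\<lambda>k. g k x) \<partial>lborel)"
      by (intro nn_integral_cong_AE) (auto elim!: AE_mp)
    also have "\<dots> \<le> liminf (\<lambda>k. integral\<^sup>N lborel (g k))"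
      by (rule nn_integral_liminf) simp
    also have "\<dots> \<le> limsup (\<lambda>k. integral\<^sup>N lborel (g k))"
      by (rule Liminf_le_Limsup) simp
    also have "\<dots> \<le> ennreal (eps n)"
    proof (rule Limsup_bounded)
      show "\<forall>\<^sub>F k in sequentially. integral\<^sup>N lborel (g k) \<le> ennreal (eps n)"
      proof (rule eventually_sequentiallyI[of n])
        fix k assume "n \<le> k"
        then have "n \<le> s k" using seq_suble[OF sm, of k] by linarith
        from bnd[OF this] show "integral\<^sup>N lborel (g k) \<le> ennreal (eps n)"
          unfolding g_def[abs_def] A_def by simp
      qed
    qed
    finally show ?thesis .
  qed
  have "(\<lambda>n. \<integral>\<^sup>+ x. ennreal ((norm (P n x - H x))^2) * indicator A x \<partial>lborel) \<longlonglongrightarrow> 0"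
  proof (rule tendsto_sandwich[OF _ _ tendsto_const])
    show "\<forall>\<^sub>F n in sequentially. 0 \<le> (\<integral>\<^sup>+ x. ennreal ((norm (P n x - H x))^2) * indicator A x \<partial>lborel)" by simp
    show "\<forall>\<^sub>F n in sequentially. (\<integral>\<^sup>+ x. ennreal ((norm (P n x - H x))^2) * indicator A x \<partial>lborel) \<le> ennreal (eps n)"
      using main by simp
    show "(\<lambda>n. ennreal (eps n)) \<longlonglongrightarrow> 0" using eps by (metis ennreal_0 tendsto_ennrealI)
  qed
  moreover have "(\<integral>\<^sup>+ x. ennreal ((norm (H x))^2) * indicator A x \<partial>lborel) < \<infinity>"
    using main[of 0] by (simp add: P0 top.not_eq_extremum le_less_trans)
  ultimately show ?thesis using sm Hmeas unfolding H_def A_def by blast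
qed

lemma cis_int_has_integral:
  fixes m :: int
  shows "((\<lambda>x. cis (2 * pi* of_int m*x)) has_integral (if m = 0 then 2 else 0)) {-1..1}"
proof (cases "m = 0")
  case True
  then show ?thesis using has_integral_const_real[of "1::complex" "-1" 1] by (simp add: scaleR_conv_of_real)
next
  case False
  define c where "c = 2 * pi* of_int m"
  have c0: "c \<noteq> 0" using False by (simp add: c_def)
  have d: "((\<lambda>x. cis (c*x) / (\<i> * of_real c)) has_vector_derivative cis (c*x)) (at x within {-1..1})" for x
  proof -
    have "((\<lambda>x. cis (c*x)) has_derivative (\<lambda>t. (c*t) *\<^sub>R (\<i> * cis (c*x)))) (at x within {-1..1})"
      by (intro has_derivative_cis derivative_intros)
    then have "((\<lambda>x. cis (c*x) / (\<i> * of_real c)) has_derivative (\<lambda>t. ((c*t) *\<^sub>R (\<i> * cis (c*x))) / (\<i> * of_real c))) (at x within {-1..1})"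
      by (rule bounded_linear.has_derivative[OF bounded_linear_divide])
    moreover have "(\<lambda>t. ((c*t) *\<^sub>R (\<i> * cis (c*x))) / (\<i> * of_real c)) = (\<lambda>t. t *\<^sub>R cis (c*x))"
      using c0 by (auto simp: scaleR_conv_of_real field_simps)
    ultimately show ?thesis by (simp add: has_vector_derivative_def)
  qed
  have "((\<lambda>x. cis (c*x)) has_integral (cis (c*1) / (\<i> * of_real c) - cis (c*(-1)) / (\<i> * of_real c))) {-1..1}"
    by (rule fundamental_theorem_of_calculus) (auto intro: d)
  moreover have "cis (c*1) = 1" "cis (c*(-1)) = 1" unfolding c_def
    by (simp_all add: cis.ctr cos_int_2pin sin_int_2pin complex_eq_iff)
  ultimately show ?thesis using False by (simp add: c_def mult.assoc)
qed

lemma orth_has_integral: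
  fixes c :: "int \<Rightarrow> complex" and K :: "int set"
  assumes K: "finite K"
  shows "((\<lambda>x. (cmod (\<Sum>k\<in>K. c k * cis (2 * pi * of_int k * x)))^2) has_integral
           (2 * (\<Sum>k\<in>K. (cmod (c k))^2))) {-1..1}"
proof -
  define g where "g x = (\<Sum>k\<in>K. \<Sum>k'\<in>K. (c k * cnj (c k')) * cis (2 * pi * of_int (k - k') * x))" for x
  have pw: "(cmod (\<Sum>k\<in>K. c k * cis (2 * pi * of_int k * x)))^2 = Re (g x)" for x
  proof -
    have "complex_of_real ((cmod (\<Sum>k\<in>K. c k * cis (2 * pi * of_int k * x)))^2)
       = (\<Sum>k\<in>K. c k * cis (2 * pi * of_int k * x)) * cnj (\<Sum>k\<in>K. c k * cis (2 * pi * of_int k * x))"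
      by (rule complex_norm_square)
    also have "\<dots> = (\<Sum>k\<in>K. \<Sum>k'\<in>K. (c k * cis (2 * pi * of_int k * x)) * cnj (c k' * cis (2 * pi * of_int k' * x)))"
      by (simp add: cnj_sum sum_product)
    also have "\<dots> = g x" unfolding g_def
    proof (intro sum.cong refl)
      fix k k' :: int
      have "cis (2 * pi * of_int k * x) * cnj (cis (2 * pi * of_int k' * x)) = cis (2 * pi * of_int (k - k') * x)"
      proof -
        have "cis (2 * pi * of_int k * x) * cnj (cis (2 * pi * of_int k' * x)) = cis (2 * pi * of_int k * x - 2 * pi * of_int k' * x)"
          by (simp add: cis_cnj cis_mult)
        also have "2 * pi * of_int k * x - 2 * pi * of_int k' * x = 2 * pi * of_int (k - k') * x"
          by (simp add: algebra_simps)
        finally show ?thesis .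
      qed
      then show "(c k * cis (2 * pi * of_int k * x)) * cnj (c k' * cis (2 * pi * of_int k' * x)) =
            (c k * cnj (c k')) * cis (2 * pi * of_int (k - k') * x)"
        by (simp add: algebra_simps)
    qed
    finally show ?thesis by (metis Re_complex_of_real)
  qed
  have "(g has_integral (\<Sum>k\<in>K. \<Sum>k'\<in>K. (c k * cnj (c k')) * (if k - k' = 0 then 2 else 0))) {-1..1}"
    unfolding g_def
    by (intro has_integral_sum K has_integral_mult_right cis_int_has_integral)
  moreover have "(\<Sum>k\<in>K. \<Sum>k'\<in>K. (c k * cnj (c k')) * (if k - k' = 0 then 2 else 0)) =
      (\<Sum>k\<in>K. 2 * (c k * cnj (c k)))"
  proof (intro sum.cong refl)
    fix k assume "k \<in> K"
    have "(\<Sum>k'\<in>K. (c k * cnj (c k')) * (if k - k' = 0 then 2 else 0)) = (\<Sum>k'\<in>K. if k = k' then 2 * (c k * cnj (c k')) else 0)"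
      by (intro sum.cong refl) auto
    also have "\<dots> = 2 * (c k * cnj (c k))" using K \<open>k \<in> K\<close> by simp
    finally show "(\<Sum>k'\<in>K. (c k * cnj (c k')) * (if k - k' = 0 then 2 else 0)) = 2 * (c k * cnj (c k))" .
  qed
  ultimately have "(g has_integral (\<Sum>k\<in>K. 2 * (c k * cnj (c k)))) {-1..1}" by simp
  from has_integral_linear[OF this bounded_linear_Re]
  have "((\<lambda>x. Re (g x)) has_integral Re (\<Sum>k\<in>K. 2 * (c k * cnj (c k)))) {-1..1}" by (simp add: o_def)
  moreover have "Re (\<Sum>k\<in>K. 2 * (c k * cnj (c k))) = 2 * (\<Sum>k\<in>K. (cmod (c k))^2)"
    by (simp add: Re_sum sum_distrib_left complex_mult_cnj cmod_def)
  ultimately show ?thesis using pw by simp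
qed

lemma cis_rem:
  "cmod (cis t - 1 - \<i> * of_real t) \<le> t^2 / 2"
proof -
  have "cmod (iexp t - (\<Sum>k \<le> 1. (\<i> * of_real t)^k / fact k)) \<le> \<bar>t\<bar>^(Suc 1) / fact (Suc 1)"
    by (rule iexp_approx1)
  moreover have "(\<Sum>k \<le> (1::nat). (\<i> * of_real t)^k / fact k) = 1 + \<i> * of_real t" by simp
  moreover have "\<bar>t\<bar>^(Suc 1) / fact (Suc 1) = t^2/2" by (simp add: power2_eq_square)
  ultimately show ?thesis by (simp add: cis_conv_exp diff_diff_add)
qed

lemma sq3: "(cmod (u + v + w))^2 \<le> 3 * ((cmod u)^2 + (cmod v)^2 + (cmod w)^2)"
proof -
  have "cmod (u + v + w) \<le> cmod u + cmod v + cmod w" by (metis norm_triangle_ineq add_right_mono order_trans)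
  then have "(cmod (u + v + w))^2 \<le> (cmod u + cmod v + cmod w)^2" by (simp add: power_mono)
  also have "\<dots> \<le> 3 * ((cmod u)^2 + (cmod v)^2 + (cmod w)^2)"
    using sum_squares_bound[of "cmod u" "cmod v"] sum_squares_bound[of "cmod u" "cmod w"] sum_squares_bound[of "cmod v" "cmod w"]
    by (simp add: power2_eq_square algebra_simps)
  finally show ?thesis .
qed

lemma sq_le1: "x \<in> {-1..1} \<Longrightarrow> (x::real)^2 \<le> 1"
  by (simp add: abs_square_le_1 abs_le_iff)

definition sdev :: "(int \<Rightarrow> real) \<Rightarrow> (int \<Rightarrow> int set) \<Rightarrow> int \<Rightarrow> real" where
  "sdev lam J k = (\<Sum>j\<in>J k. (lam j - pi * of_int k)^2)"

lemma scalar_est: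
  fixes lam :: "int \<Rightarrow> real" and a :: "int \<Rightarrow> complex" and J :: "int \<Rightarrow> int set"
    and dd :: complex and K :: "int set" and ob :: "int \<Rightarrow> real" and A :: real and B :: nat
  assumes K: "finite K"
    and J: "\<And>k. k \<in> K \<Longrightarrow> finite (J k)"
    and Jc: "\<And>k. k \<in> K \<Longrightarrow> card (J k) \<le> B"
    and aA: "\<And>k j. k \<in> K \<Longrightarrow> j \<in> J k \<Longrightarrow> cmod (a j) \<le> A"
    and A0: "0 \<le> A"
    and ob: "\<And>k. k \<in> K \<Longrightarrow> cmod ((\<Sum>j\<in>J k. a j) - dd) \<le> ob k"
  shows "integral {-1..1} (\<lambda>x. (cmod (\<Sum>k\<in>K. (\<Sum>j\<in>J k. cis (2 * lam j * x) * a j) - cis (2 * pi * of_int k * x) * dd))^2)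
     \<le> 6 * (\<Sum>k\<in>K. (ob k)^2) + 24 * A^2 * B * (\<Sum>k\<in>K. sdev lam J k) + 24 * A^2 * (\<Sum>k\<in>K. sdev lam J k)^2"
proof -
  define e where "e k x = cis (2 * pi * of_int k * x)" for k :: int and x :: real
  define b where "b k = (\<Sum>j\<in>J k. a j) - dd" for k
  define \<delta> where "\<delta> k j = lam j - pi * of_int k" for k j
  define \<beta> where "\<beta> k = (\<Sum>j\<in>J k. a j * of_real (\<delta> k j))" for k
  define \<rho> where "\<rho> k x = (\<Sum>j\<in>J k. a j * (cis (2 * \<delta> k j * x) - 1 - \<i> * of_real (2 * \<delta> k j * x)))" for k x
  define S where "S = (\<Sum>k\<in>K. sdev lam J k)"
  define f where "f x = (\<Sum>k\<in>K. (\<Sum>j\<in>J k. cis (2 * lam j * x) * a j) - cis (2 * pi * of_int k * x) * dd)" for x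
  have S0: "0 \<le> S" unfolding S_def sdev_def by (intro sum_nonneg) auto
  have fk: "(\<Sum>j\<in>J k. cis (2 * lam j * x) * a j) - cis (2 * pi * of_int k * x) * dd
      = e k x * b k + (2 * \<i> * of_real x) * (e k x * \<beta> k) + e k x * \<rho> k x" for k x
  proof -
    have "cis (2 * lam j * x) = e k x * cis (2 * \<delta> k j * x)" for j
      unfolding e_def \<delta>_def by (simp add: cis_mult algebra_simps)
    then have "(\<Sum>j\<in>J k. cis (2 * lam j * x) * a j) = e k x * (\<Sum>j\<in>J k. a j * cis (2 * \<delta> k j * x))"
      by (simp add: sum_distrib_left algebra_simps)
    also have "(\<Sum>j\<in>J k. a j * cis (2 * \<delta> k j * x)) = (\<Sum>j\<in>J k. a j) + (2 * \<i> * of_real x) * \<beta> k + \<rho> k x"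
      unfolding \<beta>_def \<rho>_def by (simp add: sum_distrib_left sum.distrib[symmetric] algebra_simps)
    finally show ?thesis unfolding b_def e_def by (simp add: algebra_simps)
  qed
  define U where "U x = (\<Sum>k\<in>K. b k * e k x)" for x
  define V where "V x = (\<Sum>k\<in>K. \<beta> k * e k x)" for x
  define W where "W x = (\<Sum>k\<in>K. e k x * \<rho> k x)" for x
  have fUVW: "f x = U x + (2 * \<i> * of_real x) * V x + W x" for x
    unfolding f_def fk U_def V_def W_def by (simp add: sum.distrib sum_distrib_left algebra_simps)
  have Wb: "cmod (W x) \<le> 2 * A * S" if x: "x \<in> {-1..1}" for x
  proof -
    have "cmod (W x) \<le> (\<Sum>k\<in>K. cmod (e k x * \<rho> k x))" unfolding W_def by (rule norm_sum)
    also have "\<dots> \<le> (\<Sum>k\<in>K. 2 * A * sdev lam J k)"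
    proof (intro sum_mono)
      fix k assume k: "k \<in> K"
      have "cmod (e k x * \<rho> k x) = cmod (\<rho> k x)" by (simp add: e_def norm_mult)
      also have "\<dots> \<le> (\<Sum>j\<in>J k. cmod (a j * (cis (2 * \<delta> k j * x) - 1 - \<i> * of_real (2 * \<delta> k j * x))))"
        unfolding \<rho>_def by (rule norm_sum)
      also have "\<dots> \<le> (\<Sum>j\<in>J k. 2 * A * (\<delta> k j)^2)"
      proof (intro sum_mono)
        fix j assume j: "j \<in> J k"
        have "cmod (cis (2 * \<delta> k j * x) - 1 - \<i> * of_real (2 * \<delta> k j * x)) \<le> (2 * \<delta> k j * x)^2 / 2"
          by (rule cis_rem)
        also have "\<dots> = 2 * (\<delta> k j)^2 * x^2" by (simp add: power2_eq_square)
        also have "\<dots> \<le> 2 * (\<delta> k j)^2 * 1"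
          using sq_le1[OF x] by (intro mult_left_mono) auto
        finally have r: "cmod (cis (2 * \<delta> k j * x) - 1 - \<i> * of_real (2 * \<delta> k j * x)) \<le> 2 * (\<delta> k j)^2" by simp
        have "cmod (a j * (cis (2 * \<delta> k j * x) - 1 - \<i> * of_real (2 * \<delta> k j * x)))
           = cmod (a j) * cmod (cis (2 * \<delta> k j * x) - 1 - \<i> * of_real (2 * \<delta> k j * x))" by (rule norm_mult)
        also have "\<dots> \<le> A * (2 * (\<delta> k j)^2)"
          by (intro mult_mono aA[OF k j] r A0) auto
        finally show "cmod (a j * (cis (2 * \<delta> k j * x) - 1 - \<i> * of_real (2 * \<delta> k j * x))) \<le> 2 * A * (\<delta> k j)^2"
          by (simp add: algebra_simps)
      qed
      also have "\<dots> = 2 * A * sdev lam J k" by (simp add: sdev_def \<delta>_def sum_distrib_left)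
      finally show "cmod (e k x * \<rho> k x) \<le> 2 * A * sdev lam J k" .
    qed
    also have "\<dots> = 2 * A * S" by (simp add: S_def sum_distrib_left)
    finally show ?thesis .
  qed
  have pw: "(cmod (f x))^2 \<le> 3 * (cmod (U x))^2 + 12 * (cmod (V x))^2 + 12 * A^2 * S^2" if x: "x \<in> {-1..1}" for x
  proof -
    have "(cmod (f x))^2 \<le> 3 * ((cmod (U x))^2 + (cmod ((2 * \<i> * of_real x) * V x))^2 + (cmod (W x))^2)"
      unfolding fUVW by (rule sq3)
    also have "(cmod ((2 * \<i> * of_real x) * V x))^2 \<le> 4 * (cmod (V x))^2"
    proof -
      have "(cmod ((2 * \<i> * of_real x) * V x))^2 = 4 * x^2 * (cmod (V x))^2"
        by (simp add: norm_mult power_mult_distrib)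
      also have "\<dots> \<le> 4 * 1 * (cmod (V x))^2"
        using sq_le1[OF x] by (intro mult_right_mono mult_left_mono) auto
      finally show ?thesis by simp
    qed
    also have "(cmod (W x))^2 \<le> (2 * A * S)^2"
      using Wb[OF x] by (intro power_mono) auto
    finally show ?thesis by (simp add: power_mult_distrib algebra_simps)
  qed
  have Uint: "((\<lambda>x. (cmod (U x))^2) has_integral (2 * (\<Sum>k\<in>K. (cmod (b k))^2))) {-1..1}"
    unfolding U_def e_def by (rule orth_has_integral[OF K])
  have Vint: "((\<lambda>x. (cmod (V x))^2) has_integral (2 * (\<Sum>k\<in>K. (cmod (\<beta> k))^2))) {-1..1}"
    unfolding V_def e_def by (rule orth_has_integral[OF K])
  have Cint: "((\<lambda>x::real. 12 * A^2 * S^2) has_integral (2 * (12 * A^2 * S^2))) {-1..1}"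
    using has_integral_const_real[of "12 * A^2 * S^2" "-1" 1] by simp
  have Rint: "((\<lambda>x. 3 * (cmod (U x))^2 + 12 * (cmod (V x))^2 + 12 * A^2 * S^2) has_integral
      (3 * (2 * (\<Sum>k\<in>K. (cmod (b k))^2)) + 12 * (2 * (\<Sum>k\<in>K. (cmod (\<beta> k))^2)) + 2 * (12 * A^2 * S^2))) {-1..1}"
    by (intro has_integral_add has_integral_mult_right Uint Vint Cint)
  have fcont: "continuous_on {-1..1} (\<lambda>x. (cmod (f x))^2)"
    unfolding f_def by (intro continuous_intros)
  have "integral {-1..1} (\<lambda>x. (cmod (f x))^2) \<le>
      3 * (2 * (\<Sum>k\<in>K. (cmod (b k))^2)) + 12 * (2 * (\<Sum>k\<in>K. (cmod (\<beta> k))^2)) + 2 * (12 * A^2 * S^2)"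
    by (rule has_integral_le[OF integrable_integral[OF integrable_continuous_interval[OF fcont]] Rint pw])
  also have "\<dots> \<le> 6 * (\<Sum>k\<in>K. (ob k)^2) + 24 * A^2 * B * S + 24 * A^2 * S^2"
  proof -
    have b1: "(\<Sum>k\<in>K. (cmod (b k))^2) \<le> (\<Sum>k\<in>K. (ob k)^2)"
    proof (intro sum_mono)
      fix k assume k: "k \<in> K"
      show "(cmod (b k))^2 \<le> (ob k)^2" using ob[OF k] unfolding b_def by (intro power_mono) auto
    qed
    have b2: "(\<Sum>k\<in>K. (cmod (\<beta> k))^2) \<le> (\<Sum>k\<in>K. A^2 * B * sdev lam J k)"
    proof (intro sum_mono)
      fix k assume k: "k \<in> K"
      have "cmod (\<beta> k) \<le> (\<Sum>j\<in>J k. cmod (a j * of_real (\<delta> k j)))" unfolding \<beta>_def by (rule norm_sum)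
      also have "\<dots> \<le> (\<Sum>j\<in>J k. A * \<bar>\<delta> k j\<bar>)"
        by (intro sum_mono) (auto simp: norm_mult intro: mult_right_mono aA[OF k])
      also have "\<dots> = A * (\<Sum>j\<in>J k. \<bar>\<delta> k j\<bar>)" by (simp add: sum_distrib_left)
      finally have c1: "cmod (\<beta> k) \<le> A * (\<Sum>j\<in>J k. \<bar>\<delta> k j\<bar>)" .
      have c2: "(\<Sum>j\<in>J k. \<bar>\<delta> k j\<bar>)^2 \<le> (\<Sum>j\<in>J k. (\<delta> k j)^2) * card (J k)"
        using sum_squared_le_sum_of_squares[of "\<lambda>j. \<bar>\<delta> k j\<bar>" "J k"] by simp
      have c3: "(\<Sum>j\<in>J k. (\<delta> k j)^2) * card (J k) \<le> (\<Sum>j\<in>J k. (\<delta> k j)^2) * B"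
        using Jc[OF k] by (intro mult_left_mono) (auto intro: sum_nonneg)
      have "(cmod (\<beta> k))^2 \<le> (A * (\<Sum>j\<in>J k. \<bar>\<delta> k j\<bar>))^2" using c1 by (intro power_mono) auto
      also have "\<dots> = A^2 * (\<Sum>j\<in>J k. \<bar>\<delta> k j\<bar>)^2" by (simp add: power_mult_distrib)
      also have "\<dots> \<le> A^2 * ((\<Sum>j\<in>J k. (\<delta> k j)^2) * B)"
        using c2 c3 by (intro mult_left_mono) auto
      also have "\<dots> = A^2 * B * sdev lam J k" by (simp add: sdev_def \<delta>_def)
      finally show "(cmod (\<beta> k))^2 \<le> A^2 * B * sdev lam J k" .
    qed
    have "(\<Sum>k\<in>K. A^2 * B * sdev lam J k) = A^2 * B * S" by (simp add: S_def sum_distrib_left)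
    then show ?thesis using b1 b2 by simp
  qed
  finally show ?thesis unfolding f_def S_def .
qed

lemma norm_sq_mat: "(norm (M::complex^'r^'s))^2 = (\<Sum>i\<in>UNIV. \<Sum>l\<in>UNIV. (cmod (M$i$l))^2)"
  by (simp add: norm_vec_def L2_set_def sum_nonneg)

lemma cmod_sum_le_sqrt:
  fixes a b :: "'i \<Rightarrow> complex"
  shows "cmod (\<Sum>j\<in>I. a j * b j) \<le> sqrt (\<Sum>j\<in>I. (cmod (a j))^2) * sqrt (\<Sum>j\<in>I. (cmod (b j))^2)"
proof -
  have "cmod (\<Sum>j\<in>I. a j * b j) \<le> (\<Sum>j\<in>I. cmod (a j) * cmod (b j))"
    using norm_sum[of "\<lambda>j. a j * b j" I] by (simp add: norm_mult)
  also have "\<dots> \<le> sqrt ((\<Sum>j\<in>I. (cmod (a j))^2) * (\<Sum>j\<in>I. (cmod (b j))^2))"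
    by (rule real_le_rsqrt, rule Cauchy_Schwarz_ineq_sum)
  finally show ?thesis by (simp add: real_sqrt_mult)
qed

lemma norm_mv_le: "norm ((A::complex^'r^'s) *v v) \<le> norm A * norm v"
proof -
  have "(norm (A *v v))^2 = (\<Sum>i\<in>UNIV. (cmod ((A *v v)$i))^2)"
    by (simp add: norm_vec_def L2_set_def sum_nonneg)
  also have "\<dots> \<le> (\<Sum>i\<in>UNIV. (norm (A$i))^2 * (norm v)^2)"
  proof (intro sum_mono)
    fix i
    have "cmod ((A *v v)$i) = cmod (\<Sum>j\<in>UNIV. A$i$j * v$j)" by (simp add: matrix_vector_mult_def)
    also have "\<dots> \<le> sqrt (\<Sum>j\<in>UNIV. (cmod (A$i$j))^2) * sqrt (\<Sum>j\<in>UNIV. (cmod (v$j))^2)"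
      by (rule cmod_sum_le_sqrt)
    also have "\<dots> = norm (A$i) * norm v" by (simp add: norm_vec_def L2_set_def)
    finally have c: "cmod ((A *v v)$i) \<le> norm (A$i) * norm v" .
    show "(cmod ((A *v v)$i))^2 \<le> (norm (A$i))^2 * (norm v)^2"
      using power_mono[OF c norm_ge_zero, of 2] by (simp add: power_mult_distrib)
  qed
  also have "\<dots> = (norm A)^2 * (norm v)^2"
    by (simp add: norm_vec_def L2_set_def sum_nonneg sum_distrib_right)
  finally have "(norm (A *v v))^2 \<le> (norm A * norm v)^2" by (simp add: power_mult_distrib)
  then show ?thesis by (rule power2_le_imp_le) simp
qed

lemma bl_mv: "bounded_linear (\<lambda>v::complex^'r. (A::complex^'r^'s) *v v)"
proof (rule bounded_linear_intro[where K="norm A"])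
  show "A *v (x + y) = A *v x + A *v y" for x y by (simp add: matrix_vector_right_distrib)
  show "A *v (r *\<^sub>R x) = r *\<^sub>R (A *v x)" for r x
    by (simp add: vec_eq_iff matrix_vector_mult_def scaleR_sum_right)
  show "norm (A *v x) \<le> norm x * norm A" for x using norm_mv_le[of A x] by (simp add: mult.commute)
qed

lemma opnorm_le_norm: "opnorm (A::complex^'r^'r) \<le> norm A"
  unfolding opnorm_def by (rule onorm_le) (simp add: norm_mv_le)

lemma norm_axis_c: "norm (axis l (1::complex) :: complex^'r) = 1"
proof -
  have "(\<Sum>m\<in>UNIV. (cmod (axis l (1::complex) $ m))^2) = (\<Sum>m\<in>UNIV. if m = l then 1 else 0)"
    by (intro sum.cong) (auto simp: axis_def)
  then show ?thesis by (simp add: norm_vec_def L2_set_def)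
qed

lemma entry_le_opnorm: "cmod (A$i$l) \<le> opnorm (A::complex^'r^'r)"
proof -
  have "A *v axis l 1 = (\<chi> m. A$m$l)"
    by (simp add: vec_eq_iff matrix_vector_mult_def axis_def if_distrib cong: if_cong)
  then have "cmod (A$i$l) = cmod ((A *v axis l 1)$i)" by simp
  also have "\<dots> \<le> norm (A *v axis l 1)" by (rule Finite_Cartesian_Product.norm_nth_le)
  also have "\<dots> \<le> opnorm A * norm (axis l (1::complex))" unfolding opnorm_def by (rule onorm[OF bl_mv])
  finally show ?thesis by (simp add: norm_axis_c)
qed

lemma opnorm_nonneg: "0 \<le> opnorm (A::complex^'r^'r)"
  unfolding opnorm_def by (rule onorm_pos_le[OF bl_mv])

lemma mv_axis: "((A::complex^'r^'s) *v axis i c) $ m = A$m$i * c"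
  by (simp add: matrix_vector_mult_def axis_def if_distrib cong: if_cong)

lemma sum_axis_cnj: "(\<Sum>m\<in>UNIV. cnj (axis i c $ m) * Y m) = cnj c * (Y i :: complex)"
proof -
  have "(\<Sum>m\<in>UNIV. cnj (axis i c $ m) * Y m) = (\<Sum>m\<in>UNIV. if m = i then cnj c * Y m else 0)"
    by (intro sum.cong) (auto simp: axis_def)
  then show ?thesis by simp
qed

lemma psd_diag:
  assumes "psd (A::complex^'r^'r)"
  shows "Im (A$i$i) = 0" "0 \<le> Re (A$i$i)"
proof -
  have "adj A = A" using assms by (simp add: psd_def)
  then have "adj A $ i $ i = A $ i $ i" by simp
  then have "cnj (A$i$i) = A$i$i" by (simp add: adj_def)
  then show "Im (A$i$i) = 0" by (metis Reals_cnj_iff complex_is_Real_iff)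
  have "0 \<le> Re (\<Sum>m\<in>UNIV. cnj (axis i 1 $ m) * (A *v axis i 1) $ m)"
    using assms by (simp add: psd_def)
  also have "(\<Sum>m\<in>UNIV. cnj (axis i 1 $ m) * (A *v axis i 1) $ m) = A$i$i"
    by (subst sum_axis_cnj) (simp add: mv_axis)
  finally show "0 \<le> Re (A$i$i)" .
qed

lemma psd_offdiag:
  assumes "psd (A::complex^'r^'r)"
  shows "2 * cmod (A$i$l) \<le> Re (A$i$i) + Re (A$l$l)"
proof (cases "i = l \<or> A$i$l = 0")
  case True
  then show ?thesis
  proof
    assume "i = l"
    then show ?thesis using psd_diag[OF assms, of i] by (simp add: cmod_def)
  next
    assume "A$i$l = 0"
    then show ?thesis using psd_diag[OF assms, of i] psd_diag[OF assms, of l] by simp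
  qed
next
  case False
  then have il: "i \<noteq> l" and w0: "A$i$l \<noteq> 0" by auto
  define w where "w = A$i$l"
  define c where "c = cmod w"
  have c0: "c > 0" using w0 by (simp add: c_def w_def)
  define z where "z = - (w / of_real c)"
  have zw: "cnj z * w = - of_real c"
  proof -
    have "cnj z * w = - (cnj w * w / of_real c)" by (simp add: z_def)
    also have "cnj w * w = of_real (c^2)" unfolding c_def by (subst complex_norm_square) (simp add: mult.commute)
    finally show ?thesis using c0 by (simp add: power2_eq_square)
  qed
  have zn: "cnj z * z = 1"
  proof -
    have "cnj z * z = cnj w * w / (of_real c * of_real c)" by (simp add: z_def)
    also have "cnj w * w = of_real (c^2)" unfolding c_def by (subst complex_norm_square) (simp add: mult.commute)
    finally show ?thesis using c0 by (simp add: power2_eq_square)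
  qed
  have adjA: "adj A = A" using assms by (simp add: psd_def)
  have Ali: "A$l$i = cnj w"
  proof -
    have "adj A $ l $ i = A $ l $ i" using adjA by simp
    then show ?thesis by (simp add: adj_def w_def)
  qed
  define v where "v = axis i z + axis l (1::complex)"
  have Av: "(A *v v) $ m = A$m$i * z + A$m$l" for m
    by (simp add: v_def matrix_vector_right_distrib mv_axis)
  have q: "(\<Sum>m\<in>UNIV. cnj (v $ m) * (A *v v) $ m) = cnj z * (A$i$i * z + A$i$l) + (A$l$i * z + A$l$l)"
  proof -
    have "(\<Sum>m\<in>UNIV. cnj (v $ m) * (A *v v) $ m) =
        (\<Sum>m\<in>UNIV. cnj (axis i z $ m) * (A *v v) $ m) + (\<Sum>m\<in>UNIV. cnj (axis l (1::complex) $ m) * (A *v v) $ m)"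
      by (simp add: v_def distrib_right sum.distrib)
    also have "\<dots> = cnj z * (A *v v) $ i + (A *v v) $ l"
      by (simp only: sum_axis_cnj) simp
    finally show ?thesis by (simp add: Av)
  qed
  have e1: "cnj z * (A$i$i * z + A$i$l) + (A$l$i * z + A$l$l) = A$i$i * (cnj z * z) + cnj z * w + cnj (cnj z * w) + A$l$l"
    by (simp add: Ali w_def algebra_simps)
  have qv: "(\<Sum>m\<in>UNIV. cnj (v $ m) * (A *v v) $ m) = A$i$i - 2 * of_real c + A$l$l"
    unfolding q e1 by (simp add: zn zw)
  have "0 \<le> Re (\<Sum>m\<in>UNIV. cnj (v $ m) * (A *v v) $ m)" using assms by (simp add: psd_def)
  then have "0 \<le> Re (A$i$i - 2 * of_real c + A$l$l)" by (simp only: qv)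
  then have "0 \<le> Re (A$i$i) - 2 * c + Re (A$l$l)" by simp
  then show ?thesis by (simp add: c_def w_def)
qed

lemma adj_sum: "adj (\<Sum>k\<in>S. f k) = (\<Sum>k\<in>S. adj (f k))"
  by (simp add: adj_def vec_eq_iff cnj_sum)

lemma adj_diff: "adj (A - B) = adj A - adj B"
  by (simp add: adj_def vec_eq_iff)

lemma adj_smat: "adj (smat c A) = smat (cnj c) (adj A)"
  by (simp add: adj_def smat_def vec_eq_iff)

lemma adj_mat1: "adj (mat 1 :: complex^'r^'r) = mat 1"
  by (simp add: adj_def mat_def vec_eq_iff)

lemma adj_adj: "adj (adj A) = A"
  by (simp add: adj_def vec_eq_iff)

lemma linear_adj: "linear (adj :: complex^'r^'r \<Rightarrow> complex^'r^'r)"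
  by (rule linearI) (simp_all add: adj_def vec_eq_iff)

lemma bl_adj: "bounded_linear (adj :: complex^'r^'r \<Rightarrow> complex^'r^'r)"
  using linear_adj linear_conv_bounded_linear by blast

lemma partialH_adj:
  assumes "\<And>j. adj (alpha j) = alpha j"
  shows "adj (partialH lam alpha n x) = partialH lam alpha n (- x)"
  unfolding partialH_def Let_def
  by (simp add: adj_diff adj_sum adj_smat adj_mat1 assms cis_cnj)

definition kof :: "real \<Rightarrow> int" where "kof x = ceiling (x / pi - 1/2)"

lemma Delta_iff: "x \<in> Delta k \<longleftrightarrow> kof x = k"
proof -
  have p: "pi > 0" by (rule pi_gt_zero)
  have "x \<in> Delta k \<longleftrightarrow> pi * of_int k - pi/2 < x \<and> x \<le> pi * of_int k + pi/2"
    by (simp add: Delta_def)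
  also have "\<dots> \<longleftrightarrow> of_int k - 1 < x / pi - 1/2 \<and> x / pi - 1/2 \<le> of_int k"
    using p by (simp add: field_simps)
  also have "\<dots> \<longleftrightarrow> kof x = k" unfolding kof_def by (simp add: ceiling_eq_iff)
  finally show ?thesis .
qed

lemma S_iff: "x \<in> {- pi * (real n - 1/2) <.. pi * (real n + 1/2)} \<longleftrightarrow> kof x \<in> {1 - int n..int n}"
proof -
  have p: "pi > 0" by (rule pi_gt_zero)
  have "x \<in> {- pi * (real n - 1/2) <.. pi * (real n + 1/2)} \<longleftrightarrow> - real n < x / pi - 1/2 \<and> x / pi - 1/2 \<le> real n"
    using p by (simp add: field_simps)
  also have "\<dots> \<longleftrightarrow> - int n < kof x \<and> kof x \<le> int n"
    unfolding kof_def by (simp add: less_ceiling_iff ceiling_le_iff)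
  also have "\<dots> \<longleftrightarrow> kof x \<in> {1 - int n..int n}" by auto
  finally show ?thesis .
qed

lemma kof_pi: "kof (pi * of_int k) = k"
  unfolding kof_def by (simp add: ceiling_eq_iff)

definition Fk :: "(int \<Rightarrow> real) \<Rightarrow> (int \<Rightarrow> complex^'r^'r) \<Rightarrow> int \<Rightarrow> real \<Rightarrow> complex^'r^'r" where
  "Fk lam alpha k x = (\<Sum>j\<in>idx_in lam (Delta k). smat (cis (2 * lam j * x)) (alpha j)) - smat (cis (2 * pi * of_int k * x)) (mat 1)"

lemma partialH_decomp:
  assumes fin: "\<And>k. finite (idx_in lam (Delta k))"
  shows "partialH lam alpha n x = (\<Sum>k\<in>{1 - int n..int n}. Fk lam alpha k x)"
proof -
  define S where "S = {- pi * (real n - 1/2) <.. pi * (real n + 1/2)}"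
  have fin': "finite {j. kof (lam j) = k}" for k using fin[of k] by (simp add: idx_in_def Delta_iff)
  have Si: "y \<in> S \<longleftrightarrow> kof y \<in> {1 - int n..int n}" for y
    unfolding S_def by (rule S_iff)
  have idx: "idx_in lam S = (\<Union>k\<in>{1 - int n..int n}. idx_in lam (Delta k))"
    unfolding idx_in_def Si Delta_iff by auto
  have pk: "{k::int. pi * of_int k \<in> S} = {1 - int n..int n}"
    unfolding Si kof_pi by auto
  have "(\<Sum>j\<in>idx_in lam S. smat (cis (2 * lam j * x)) (alpha j)) =
      (\<Sum>k\<in>{1 - int n..int n}. \<Sum>j\<in>idx_in lam (Delta k). smat (cis (2 * lam j * x)) (alpha j))"
    unfolding idx
    by (rule sum.UNION_disjoint) (auto simp: fin' idx_in_def Delta_iff)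
  then show ?thesis
    unfolding partialH_def Let_def S_def[symmetric] pk Fk_def
    by (simp add: sum_subtractf)
qed

lemma partialH_diff:
  assumes fin: "\<And>k. finite (idx_in lam (Delta k))" and nm: "n \<le> m"
  shows "partialH lam alpha m x - partialH lam alpha n x =
     (\<Sum>k\<in>{1 - int m..int m} - {1 - int n..int n}. Fk lam alpha k x)"
proof -
  have "{1 - int n..int n} \<subseteq> {1 - int m..int m}" using nm by auto
  then show ?thesis unfolding partialH_decomp[OF fin]
    by (simp add: sum_diff)
qed

lemma Fk_entry:
  "Fk lam alpha k x $ i $ l = (\<Sum>j\<in>idx_in lam (Delta k). cis (2 * lam j * x) * (alpha j $ i $ l))
      - cis (2 * pi * of_int k * x) * (mat 1 $ i $ l :: complex)"
  by (simp add: Fk_def smat_def)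

lemma tail_le:
  fixes f :: "int \<Rightarrow> real"
  assumes nn: "\<And>k. 0 \<le> f k" and sm: "f summable_on UNIV" and F: "finite F"
  shows "sum f F \<le> infsum f UNIV"
proof -
  have "infsum f F \<le> infsum f UNIV"
    by (rule infsum_mono_neutral) (auto simp: F sm nn)
  then show ?thesis using F by simp
qed

lemma tail_lim:
  fixes f :: "int \<Rightarrow> real"
  assumes sm: "f summable_on UNIV"
  shows "(\<lambda>n. sum f {1 - int n..int n}) \<longlonglongrightarrow> infsum f UNIV"
proof -
  have h: "(sum f \<longlongrightarrow> infsum f UNIV) (finite_subsets_at_top UNIV)"
    using has_sum_infsum[OF sm] unfolding has_sum_def .
  have fl: "filterlim (\<lambda>n::nat. {1 - int n..int n}) (finite_subsets_at_top UNIV) sequentially"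
    unfolding filterlim_finite_subsets_at_top
  proof (intro allI impI)
    fix X :: "int set" assume "finite X \<and> X \<subseteq> UNIV"
    then have X: "finite X" by simp
    define M where "M = nat (Max (insert 0 (abs ` X)))"
    have xb: "\<bar>x\<bar> \<le> int M" if "x \<in> X" for x
    proof -
      have "\<bar>x\<bar> \<le> Max (insert 0 (abs ` X))" using X that by (intro Max_ge) auto
      then show ?thesis unfolding M_def by linarith
    qed
    show "\<forall>\<^sub>F n in sequentially. finite {1 - int n..int n} \<and> X \<subseteq> {1 - int n..int n} \<and> {1 - int n..int n} \<subseteq> UNIV"
    proof (rule eventually_sequentiallyI[of "Suc M"])
      fix n assume "Suc M \<le> n"
      then have "X \<subseteq> {1 - int n..int n}" using xb by fastforce
      then show "finite {1 - int n..int n} \<and> X \<subseteq> {1 - int n..int n} \<and> {1 - int n..int n} \<subseteq> UNIV" by simp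
    qed
  qed
  show ?thesis by (rule filterlim_compose[OF h fl])
qed

lemma cont_smat: "continuous_on S g \<Longrightarrow> continuous_on S (\<lambda>x. smat (g x) A)"
  unfolding smat_def by (intro continuous_intros)

lemma partialH_cont:
  assumes fin: "\<And>k. finite (idx_in lam (Delta k))"
  shows "continuous_on UNIV (partialH lam alpha n)"
proof -
  have "partialH lam alpha n = (\<lambda>x. \<Sum>k\<in>{1 - int n..int n}. Fk lam alpha k x)"
    using partialH_decomp[OF fin] by blast
  moreover have "continuous_on UNIV (\<lambda>x. \<Sum>k\<in>{1 - int n..int n}. Fk lam alpha k x)"
    unfolding Fk_def by (intro continuous_intros cont_smat)
  ultimately show ?thesis by simp
qed

lemma partialH_meas:
  assumes fin: "\<And>k. finite (idx_in lam (Delta k))"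
  shows "partialH lam alpha n \<in> borel_measurable lborel"
  using borel_measurable_continuous_onI[OF partialH_cont[OF fin]] by simp

lemma entry_bound:
  fixes alpha :: "int \<Rightarrow> complex^'r^'r"
  assumes psd: "\<And>j. psd (alpha j)" and j: "j \<in> J" and fin: "finite J"
    and obk: "opnorm (mat 1 - (\<Sum>j\<in>J. alpha j)) \<le> R"
  shows "cmod (alpha j $ i $ l) \<le> 1 + R"
proof -
  have diag: "Re (alpha j $ m $ m) \<le> 1 + R" for m
  proof -
    have "Re (alpha j $ m $ m) \<le> (\<Sum>j'\<in>J. Re (alpha j' $ m $ m))"
      by (rule member_le_sum) (auto simp: j fin psd_diag(2)[OF psd])
    also have "\<dots> = Re ((\<Sum>j'\<in>J. alpha j') $ m $ m)" by (simp add: Re_sum)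
    also have "(\<Sum>j'\<in>J. alpha j') $ m $ m = 1 - (mat 1 - (\<Sum>j\<in>J. alpha j)) $ m $ m"
      by (simp add: mat_def)
    also have "Re (1 - (mat 1 - (\<Sum>j\<in>J. alpha j)) $ m $ m) \<le> 1 + cmod ((mat 1 - (\<Sum>j\<in>J. alpha j)) $ m $ m)"
      using abs_Re_le_cmod[of "(mat 1 - (\<Sum>j\<in>J. alpha j)) $ m $ m"] by simp
    also have "\<dots> \<le> 1 + R" using entry_le_opnorm[of "mat 1 - (\<Sum>j\<in>J. alpha j)" m m] obk by simp
    finally show ?thesis .
  qed
  have "2 * cmod (alpha j $ i $ l) \<le> Re (alpha j $ i $ i) + Re (alpha j $ l $ l)"
    by (rule psd_offdiag[OF psd])
  then show ?thesis using diag[of i] diag[of l] by simp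
qed

lemma mat_est:
  fixes lam :: "int \<Rightarrow> real" and alpha :: "int \<Rightarrow> complex^'r^'r"
  assumes fin: "\<And>k. finite (idx_in lam (Delta k))"
    and card: "\<And>k. card (idx_in lam (Delta k)) \<le> B"
    and aA: "\<And>k j i l. j \<in> idx_in lam (Delta k) \<Longrightarrow> cmod (alpha j $ i $ l) \<le> A"
    and A0: "0 \<le> A"
    and nm: "n \<le> m"
  shows "integral {-1..1} (\<lambda>x. (norm (partialH lam alpha m x - partialH lam alpha n x))^2) \<le>
    real (CARD('r))^2 * (6 * (\<Sum>k\<in>{1 - int m..int m} - {1 - int n..int n}. (opnorm (mat 1 - (\<Sum>j\<in>idx_in lam (Delta k). alpha j)))^2)
      + 24 * A^2 * B * (\<Sum>k\<in>{1 - int m..int m} - {1 - int n..int n}. sdev lam (\<lambda>k. idx_in lam (Delta k)) k)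
      + 24 * A^2 * (\<Sum>k\<in>{1 - int m..int m} - {1 - int n..int n}. sdev lam (\<lambda>k. idx_in lam (Delta k)) k)^2)"
    (is "_ \<le> _ * ?C")
proof -
  define K where "K = {1 - int m..int m} - {1 - int n..int n}"
  define J where "J k = idx_in lam (Delta k)" for k
  define g where "g i l x = (cmod (\<Sum>k\<in>K. (\<Sum>j\<in>J k. cis (2 * lam j * x) * (alpha j $ i $ l)) - cis (2 * pi * of_int k * x) * (mat 1 $ i $ l :: complex)))^2" for i l x
  have Kf: "finite K" unfolding K_def by simp
  have eq: "(norm (partialH lam alpha m x - partialH lam alpha n x))^2 = (\<Sum>i\<in>UNIV. \<Sum>l\<in>UNIV. g i l x)" for x
    unfolding partialH_diff[OF fin nm] norm_sq_mat g_def K_def J_def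
    by (simp add: Fk_entry)
  have gint: "g i l integrable_on {-1..1}" for i l
    unfolding g_def by (intro integrable_continuous_interval continuous_intros)
  have gle: "integral {-1..1} (g i l) \<le> ?C" for i l
  proof -
    have "integral {-1..1} (g i l) \<le> 6 * (\<Sum>k\<in>K. (opnorm (mat 1 - (\<Sum>j\<in>J k. alpha j)))^2)
      + 24 * A^2 * B * (\<Sum>k\<in>K. sdev lam J k) + 24 * A^2 * (\<Sum>k\<in>K. sdev lam J k)^2"
      unfolding g_def
    proof (rule scalar_est[OF Kf])
      show "finite (J k)" for k unfolding J_def by (rule fin)
      show "card (J k) \<le> B" for k unfolding J_def by (rule card)
      show "cmod (alpha j $ i $ l) \<le> A" if "j \<in> J k" for k j using that aA unfolding J_def by blast
      show "0 \<le> A" by (rule A0)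
      show "cmod ((\<Sum>j\<in>J k. alpha j $ i $ l) - mat 1 $ i $ l) \<le> opnorm (mat 1 - (\<Sum>j\<in>J k. alpha j))" for k
      proof -
        have "(\<Sum>j\<in>J k. alpha j $ i $ l) - mat 1 $ i $ l = - ((mat 1 - (\<Sum>j\<in>J k. alpha j)) $ i $ l)"
          by simp
        then show ?thesis using entry_le_opnorm[of "mat 1 - (\<Sum>j\<in>J k. alpha j)" i l] by (simp add: norm_minus_commute)
      qed
    qed
    then show ?thesis unfolding K_def J_def .
  qed
  have "integral {-1..1} (\<lambda>x. (norm (partialH lam alpha m x - partialH lam alpha n x))^2)
      = (\<Sum>i\<in>UNIV. \<Sum>l\<in>UNIV. integral {-1..1} (g i l))"
    unfolding eq by (simp add: integral_sum gint integrable_sum)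
  also have "\<dots> \<le> (\<Sum>i\<in>(UNIV::'r set). \<Sum>l\<in>(UNIV::'r set). ?C)"
    by (intro sum_mono gle)
  also have "\<dots> = real (CARD('r))^2 * ?C" by (simp add: power2_eq_square)
  finally show ?thesis .
qed

lemma Hsym:
  fixes P :: "nat \<Rightarrow> real \<Rightarrow> complex^'r^'r"
  assumes sym: "\<And>n x. adj (P n x) = P n (-x)"
  shows "adj (lim (\<lambda>i. if Cauchy (\<lambda>i. P (s i) x) then P (s i) x else 0)) =
         lim (\<lambda>i. if Cauchy (\<lambda>i. P (s i) (-x)) then P (s i) (-x) else 0)"
proof -
  have conv: "Cauchy (\<lambda>i. P (s i) (-y))" if "Cauchy (\<lambda>i. P (s i) y)" for y
  proof -
    from that obtain L where "(\<lambda>i. P (s i) y) \<longlonglongrightarrow> L" using Cauchy_convergent convergent_def by blast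
    then have "(\<lambda>i. adj (P (s i) y)) \<longlonglongrightarrow> adj L" by (rule bounded_linear.tendsto[OF bl_adj])
    then have "(\<lambda>i. P (s i) (-y)) \<longlonglongrightarrow> adj L" by (simp add: sym)
    then show ?thesis by (rule convergent_Cauchy[OF convergentI])
  qed
  show ?thesis
  proof (cases "Cauchy (\<lambda>i. P (s i) x)")
    case True
    then have C2: "Cauchy (\<lambda>i. P (s i) (-x))" by (rule conv)
    from True obtain L where L: "(\<lambda>i. P (s i) x) \<longlonglongrightarrow> L" using Cauchy_convergent convergent_def by blast
    then have "(\<lambda>i. adj (P (s i) x)) \<longlonglongrightarrow> adj L" by (rule bounded_linear.tendsto[OF bl_adj])
    then have L2: "(\<lambda>i. P (s i) (-x)) \<longlonglongrightarrow> adj L" by (simp add: sym)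
    show ?thesis using True C2 L L2 by (simp add: limI)
  next
    case False
    have "\<not> Cauchy (\<lambda>i. P (s i) (-x))"
    proof
      assume "Cauchy (\<lambda>i. P (s i) (-x))"
      from conv[OF this] False show False by simp
    qed
    then show ?thesis using False by (simp add: adj_def vec_eq_iff limI)
  qed
qed

theorem lemma2p5:
  fixes lam :: "int \<Rightarrow> real" and alpha :: "int \<Rightarrow> complex^'r^'r"
  assumes "strict_mono lam" and "lam 0 \<le> 0" and "0 < lam 1"
    and "\<And>j. alpha j \<noteq> 0" and "\<And>j. psd (alpha j)"
    and "condA1 lam alpha"
  shows "\<exists>H :: real \<Rightarrow> complex^'r^'r.
           H \<in> borel_measurable lborel \<and>
           (\<integral>\<^sup>+ x \<in> {-1<..<1}. ennreal ((opnorm (H x))^2) \<partial>lborel) < \<infinity> \<and>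
           (\<lambda>n. \<integral>\<^sup>+ x \<in> {-1<..<1}. ennreal ((opnorm (partialH lam alpha n x - H x))^2) \<partial>lborel)
              \<longlonglongrightarrow> 0 \<and>
           (AE x in lborel. x \<in> {-1<..<1} \<longrightarrow> adj (H x) = H (- x))"
proof -
  note psd = assms(5)
  from assms(6) obtain B :: nat where
    Bf: "\<And>n. finite (idx_in lam (Delta n))" and Bc: "\<And>n. card (idx_in lam (Delta n)) \<le> B"
    and s1: "(\<lambda>n. \<Sum>j\<in>idx_in lam (Delta n). (lam j - pi * of_int n)^2) summable_on UNIV"
    and o1: "(\<lambda>n. (opnorm (mat 1 - (\<Sum>k\<in>idx_in lam (Delta n). alpha k)))^2) summable_on UNIV"
    unfolding condA1_def by blast
  define ob2 where "ob2 k = (opnorm (mat 1 - (\<Sum>j\<in>idx_in lam (Delta k). alpha j)))^2" for k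
  define sd where "sd k = sdev lam (\<lambda>k. idx_in lam (Delta k)) k" for k
  have osm: "ob2 summable_on UNIV" using o1 unfolding ob2_def .
  have ssm: "sd summable_on UNIV" using s1 unfolding sd_def sdev_def .
  have onn: "0 \<le> ob2 k" for k by (simp add: ob2_def)
  have snn: "0 \<le> sd k" for k by (simp add: sd_def sdev_def sum_nonneg)
  define Ot where "Ot = infsum ob2 UNIV"
  define Sd where "Sd = infsum sd UNIV"
  define A where "A = 1 + sqrt Ot"
  have obO: "opnorm (mat 1 - (\<Sum>j\<in>idx_in lam (Delta k). alpha j)) \<le> sqrt Ot" for k
  proof (rule real_le_rsqrt)
    have "sum ob2 {k} \<le> Ot" unfolding Ot_def by (rule tail_le[OF onn osm]) simp
    then show "(opnorm (mat 1 - (\<Sum>j\<in>idx_in lam (Delta k). alpha j)))^2 \<le> Ot" by (simp add: ob2_def)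
  qed
  have aA: "cmod (alpha j $ i $ l) \<le> A" if "j \<in> idx_in lam (Delta k)" for k j i l
    unfolding A_def by (rule entry_bound[OF psd that Bf obO])
  have O0: "0 \<le> Ot" unfolding Ot_def using tail_le[OF onn osm, of "{}"] by simp
  have A0: "0 \<le> A" unfolding A_def using O0 by simp
  have S0: "0 \<le> Sd" unfolding Sd_def using tail_le[OF snn ssm, of "{}"] by simp
  define P where "P n = partialH lam alpha n" for n
  define C where "C = real (CARD('r))^2"
  define eps where "eps n = C * (6 * (Ot - sum ob2 {1 - int n..int n}) + 24 * A^2 * B * (Sd - sum sd {1 - int n..int n})
     + 24 * A^2 * Sd * (Sd - sum sd {1 - int n..int n}))" for n
  have C0: "0 \<le> C" unfolding C_def by simp
  have epslim: "eps \<longlonglongrightarrow> 0"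
  proof -
    have l1: "(\<lambda>n. sum ob2 {1 - int n..int n}) \<longlonglongrightarrow> Ot" unfolding Ot_def by (rule tail_lim[OF osm])
    have l2: "(\<lambda>n. sum sd {1 - int n..int n}) \<longlonglongrightarrow> Sd" unfolding Sd_def by (rule tail_lim[OF ssm])
    have "eps \<longlonglongrightarrow> C * (6 * (Ot - Ot) + 24 * A^2 * B * (Sd - Sd) + 24 * A^2 * Sd * (Sd - Sd))"
      unfolding eps_def[abs_def] by (intro tendsto_intros l1 l2)
    then show ?thesis by simp
  qed
  have Pmeas: "P n \<in> borel_measurable lborel" for n unfolding P_def by (rule partialH_meas[OF Bf])
  have P0: "P 0 x = 0" for x unfolding P_def partialH_decomp[OF Bf] by simp
  have bnd: "(\<integral>\<^sup>+ x \<in> {-1<..<1}. ennreal ((norm (P m x - P n x))^2) \<partial>lborel) \<le> ennreal (eps n)"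
    if nm: "n \<le> m" for n m
  proof -
    define K where "K = {1 - int m..int m} - {1 - int n..int n}"
    have sub: "{1 - int n..int n} \<subseteq> {1 - int m..int m}" using nm by auto
    have t1: "sum ob2 K \<le> Ot - sum ob2 {1 - int n..int n}"
      using tail_le[OF onn osm, of "{1 - int m..int m}"] sub unfolding K_def Ot_def by (simp add: sum_diff)
    have t2: "sum sd K \<le> Sd - sum sd {1 - int n..int n}"
      using tail_le[OF snn ssm, of "{1 - int m..int m}"] sub unfolding K_def Sd_def by (simp add: sum_diff)
    have t3: "0 \<le> sum sd K" by (simp add: snn sum_nonneg)
    have t4: "sum sd K \<le> Sd"
      using tail_le[OF snn ssm, of K] unfolding K_def Sd_def by simp
    have t5: "(sum sd K)^2 \<le> Sd * (Sd - sum sd {1 - int n..int n})"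
    proof -
      have "(sum sd K)^2 = sum sd K * sum sd K" by (simp add: power2_eq_square)
      also have "\<dots> \<le> Sd * (Sd - sum sd {1 - int n..int n})"
        using t2 t3 t4 by (intro mult_mono) auto
      finally show ?thesis .
    qed
    define g where "g x = (norm (P m x - P n x))^2" for x
    have "integral {-1..1} g \<le> C * (6 * sum ob2 K + 24 * A^2 * B * sum sd K + 24 * A^2 * (sum sd K)^2)"
      unfolding g_def P_def C_def K_def ob2_def sd_def
      by (rule mat_est[OF Bf Bc aA A0 nm])
    also have "\<dots> \<le> eps n" unfolding eps_def
      using t1 t2 t5 C0 A0
      by (intro mult_left_mono add_mono) (auto intro!: mult_left_mono)
    finally have ile: "integral {-1..1} g \<le> eps n" .
    have gcont: "continuous_on {-1..1} g"
      unfolding g_def P_def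
      by (intro continuous_intros continuous_on_subset[OF partialH_cont[OF Bf]]) auto
    have gi: "(g has_integral integral {-1..1} g) {-1..1}"
      by (rule integrable_integral[OF integrable_continuous_interval[OF gcont]])
    have "(\<integral>\<^sup>+ x \<in> {-1<..<1}. ennreal ((norm (P m x - P n x))^2) \<partial>lborel) \<le>
          (\<integral>\<^sup>+ x. ennreal (indicator {-1..1} x * g x) \<partial>lborel)"
      unfolding g_def by (intro nn_integral_mono) (auto simp: indicator_def)
    also have "\<dots> = ennreal (integral {-1..1} g)"
      using nn_integral_has_integral_lebesgue[OF _ gi] by (simp add: g_def)
    also have "\<dots> \<le> ennreal (eps n)" using ile by (rule ennreal_leI)
    finally show ?thesis .
  qed
  obtain s where sm: "strict_mono s" and
    Hm: "(\<lambda>x. lim (\<lambda>i. if Cauchy (\<lambda>i. P (s i) x) then P (s i) x else 0)) \<in> borel_measurable lborel" and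
    Hf: "(\<integral>\<^sup>+ x \<in> {-1<..<1}. ennreal ((norm (lim (\<lambda>i. if Cauchy (\<lambda>i. P (s i) x) then P (s i) x else 0)))^2) \<partial>lborel) < \<infinity>" and
    Hl: "(\<lambda>n. \<integral>\<^sup>+ x \<in> {-1<..<1}. ennreal ((norm (P n x - lim (\<lambda>i. if Cauchy (\<lambda>i. P (s i) x) then P (s i) x else 0)))^2) \<partial>lborel) \<longlonglongrightarrow> 0"
    using L2_limit[OF Pmeas P0 bnd epslim] by blast
  define H where "H x = lim (\<lambda>i. if Cauchy (\<lambda>i. P (s i) x) then P (s i) x else 0)" for x
  have opn: "ennreal ((opnorm M)^2) \<le> ennreal ((norm M)^2)" for M :: "complex^'r^'r"
    using opnorm_le_norm[of M] opnorm_nonneg[of M] by (intro ennreal_leI power_mono) auto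
  have sym: "adj (P n x) = P n (-x)" for n x
    unfolding P_def by (rule partialH_adj) (simp add: psd[unfolded psd_def])
  show ?thesis
  proof (intro exI[of _ H] conjI)
    show "H \<in> borel_measurable lborel" using Hm unfolding H_def[abs_def] .
    have "(\<integral>\<^sup>+ x \<in> {-1<..<1}. ennreal ((opnorm (H x))^2) \<partial>lborel) \<le> (\<integral>\<^sup>+ x \<in> {-1<..<1}. ennreal ((norm (H x))^2) \<partial>lborel)"
      by (intro nn_integral_mono mult_right_mono opn) auto
    also have "\<dots> < \<infinity>" using Hf unfolding H_def .
    finally show "(\<integral>\<^sup>+ x \<in> {-1<..<1}. ennreal ((opnorm (H x))^2) \<partial>lborel) < \<infinity>" .
    show "(\<lambda>n. \<integral>\<^sup>+ x \<in> {-1<..<1}. ennreal ((opnorm (partialH lam alpha n x - H x))^2) \<partial>lborel) \<longlonglongrightarrow> 0"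
    proof (rule tendsto_sandwich[OF _ _ tendsto_const])
      show "\<forall>\<^sub>F n in sequentially. 0 \<le> (\<integral>\<^sup>+ x \<in> {-1<..<1}. ennreal ((opnorm (partialH lam alpha n x - H x))^2) \<partial>lborel)"
        by simp
      show "\<forall>\<^sub>F n in sequentially. (\<integral>\<^sup>+ x \<in> {-1<..<1}. ennreal ((opnorm (partialH lam alpha n x - H x))^2) \<partial>lborel)
          \<le> (\<integral>\<^sup>+ x \<in> {-1<..<1}. ennreal ((norm (P n x - H x))^2) \<partial>lborel)"
        unfolding P_def by (intro always_eventually allI nn_integral_mono mult_right_mono opn) auto
      show "(\<lambda>n. \<integral>\<^sup>+ x \<in> {-1<..<1}. ennreal ((norm (P n x - H x))^2) \<partial>lborel) \<longlonglongrightarrow> 0"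
        using Hl unfolding H_def .
    qed
    show "AE x in lborel. x \<in> {-1<..<1} \<longrightarrow> adj (H x) = H (- x)"
      unfolding H_def using Hsym[of P, OF sym] by simp
  qed
qed

end
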